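(* Let $P \in S$ have degree $n > 0$ in $x$. Then there exist $n$ elements of $S$ that generate $C_S(P)$ as a $K$-algebra.
   Context: Standing conventions: $K$ is a field, $R = K[y]$, $\sigma$ is a $K$-algebra endomorphism of $R$ with $\deg_y(\sigma(y)) > 1$, and $\delta$ is a $K$-linear $\sigma$-derivation of $R$ ($\delta(ab) = \sigma(a)\delta(b) + \delta(a)b$). $S = R[x;\sigma,\delta]$ is the Ore extension (polynomials $\sum r_i x^i$, $r_i\in R$, with $xr = \sigma(r)x + \delta(r)$). $C_S(P)$ is the centralizer of $P$ in $S$. *)

theory Defs
  imports "HOL-Computational_Algebra.Polynomial"
begin

text \<open>Elements of the Ore extension S = R[x;sigma,delta], R = K[y], are represented as
  polynomials in x with coefficients in R, i.e. as terms of type 'a poly poly: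
  the i-th coefficient is the coefficient r_i of x^i in the normal form sum r_i x^i.\<close>

definition K_alg_endo :: "('a::field poly \<Rightarrow> 'a poly) \<Rightarrow> bool" where
  "K_alg_endo \<sigma> \<longleftrightarrow>
     (\<forall>p q. \<sigma> (p + q) = \<sigma> p + \<sigma> q) \<and>
     (\<forall>p q. \<sigma> (p * q) = \<sigma> p * \<sigma> q) \<and>
     (\<forall>c. \<sigma> [:c:] = [:c:])"

definition sigma_derivation :: "('a::field poly \<Rightarrow> 'a poly) \<Rightarrow> ('a poly \<Rightarrow> 'a poly) \<Rightarrow> bool" where
  "sigma_derivation \<sigma> \<delta> \<longleftrightarrow>
     (\<forall>p q. \<delta> (p + q) = \<delta> p + \<delta> q) \<and>
     (\<forall>c p. \<delta> (smult c p) = smult c (\<delta> p)) \<and>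
     (\<forall>p q. \<delta> (p * q) = \<sigma> p * \<delta> q + \<delta> p * q)"

text \<open>Left multiplication by x: x * (sum r_i x^i) = sum (sigma(r_i) x^(i+1) + delta(r_i) x^i).\<close>
definition ore_xmul :: "('a::field poly \<Rightarrow> 'a poly) \<Rightarrow> ('a poly \<Rightarrow> 'a poly) \<Rightarrow> 'a poly poly \<Rightarrow> 'a poly poly" where
  "ore_xmul \<sigma> \<delta> Q = pCons 0 (map_poly \<sigma> Q) + map_poly \<delta> Q"

definition ore_mult :: "('a::field poly \<Rightarrow> 'a poly) \<Rightarrow> ('a poly \<Rightarrow> 'a poly) \<Rightarrow> 'a poly poly \<Rightarrow> 'a poly poly \<Rightarrow> 'a poly poly" where
  "ore_mult \<sigma> \<delta> P Q = (\<Sum>i\<le>degree P. smult (coeff P i) ((ore_xmul \<sigma> \<delta> ^^ i) Q))"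

definition centralizer :: "('a::field poly \<Rightarrow> 'a poly) \<Rightarrow> ('a poly \<Rightarrow> 'a poly) \<Rightarrow> 'a poly poly \<Rightarrow> 'a poly poly set" where
  "centralizer \<sigma> \<delta> P = {Q. ore_mult \<sigma> \<delta> P Q = ore_mult \<sigma> \<delta> Q P}"

text \<open>The K-subalgebra of S generated by a set G (K embedded as constants [:[:c:]:];
  scalar multiplication by c is multiplication by this constant).\<close>
inductive_set alg_gen :: "('a::field poly \<Rightarrow> 'a poly) \<Rightarrow> ('a poly \<Rightarrow> 'a poly) \<Rightarrow> 'a poly poly set \<Rightarrow> 'a poly poly set"
  for \<sigma> \<delta> G where
  const: "[:[:c:]:] \<in> alg_gen \<sigma> \<delta> G"
| gen: "g \<in> G \<Longrightarrow> g \<in> alg_gen \<sigma> \<delta> G"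
| add: "a \<in> alg_gen \<sigma> \<delta> G \<Longrightarrow> b \<in> alg_gen \<sigma> \<delta> G \<Longrightarrow> a + b \<in> alg_gen \<sigma> \<delta> G"
| mult: "a \<in> alg_gen \<sigma> \<delta> G \<Longrightarrow> b \<in> alg_gen \<sigma> \<delta> G \<Longrightarrow> ore_mult \<sigma> \<delta> a b \<in> alg_gen \<sigma> \<delta> G"

end

theory Submission
  imports Defs
begin


locale ore =
  fixes \<sigma> \<delta> :: "'a::field poly \<Rightarrow> 'a poly"
  assumes endo: "K_alg_endo \<sigma>" and der: "sigma_derivation \<sigma> \<delta>"
begin

abbreviation X where "X \<equiv> ore_xmul \<sigma> \<delta>"
abbreviation M where "M \<equiv> ore_mult \<sigma> \<delta>"

lemma s_add: "\<sigma> (p + q) = \<sigma> p + \<sigma> q" using endo by (simp add: K_alg_endo_def)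
lemma s_mult: "\<sigma> (p * q) = \<sigma> p * \<sigma> q" using endo by (simp add: K_alg_endo_def)
lemma s_const: "\<sigma> [:c:] = [:c:]" using endo by (simp add: K_alg_endo_def)
lemma s_0[simp]: "\<sigma> 0 = 0" using s_const[of 0] by simp
lemma s_1[simp]: "\<sigma> 1 = 1" using s_const[of 1] by (simp add: one_pCons)
lemma d_add: "\<delta> (p + q) = \<delta> p + \<delta> q" using der by (simp add: sigma_derivation_def)
lemma d_smult: "\<delta> (smult c p) = smult c (\<delta> p)" using der by (simp add: sigma_derivation_def)
lemma d_mult: "\<delta> (p * q) = \<sigma> p * \<delta> q + \<delta> p * q" using der by (simp add: sigma_derivation_def)
lemma d_0[simp]: "\<delta> 0 = 0"
proof - have "\<delta> 0 = \<delta> 0 + \<delta> 0" using d_add[of 0 0] by simp then show ?thesis by (metis add_cancel_right_right) qed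
lemma d_1[simp]: "\<delta> 1 = 0"
proof - have "\<delta> 1 = \<delta> 1 + \<delta> 1" using d_mult[of 1 1] by simp then show ?thesis by (metis add_cancel_right_right) qed
lemma d_const[simp]: "\<delta> [:c:] = 0"
proof -
  have "[:c:] = smult c 1" by simp
  then show ?thesis using d_smult[of c 1] by simp
qed

lemma s_pcompose: "\<sigma> p = pcompose p (\<sigma> [:0,1:])"
proof (induction p)
  case 0 then show ?case by simp
next
  case (pCons a p)
  have "pCons a p = [:a:] + [:0,1:] * p" by (simp add: poly_eq_iff coeff_pCons split: nat.split)
  then have "\<sigma> (pCons a p) = \<sigma> [:a:] + \<sigma> [:0,1:] * \<sigma> p" by (metis s_add s_mult)
  then have "\<sigma> (pCons a p) = [:a:] + \<sigma> [:0,1:] * \<sigma> p" by (simp add: s_const)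
  then show ?case using pCons by (simp add: pcompose_pCons)
qed

lemma coeff_X: "coeff (X Q) i = (if i = 0 then 0 else \<sigma> (coeff Q (i - 1))) + \<delta> (coeff Q i)"
  by (simp add: ore_xmul_def coeff_map_poly coeff_pCons split: nat.split)

lemma X_add: "X (A + B) = X A + X B"
  by (rule poly_eqI) (simp add: coeff_X s_add d_add)

lemma X_0[simp]: "X 0 = 0"
  by (rule poly_eqI) (simp add: coeff_X)

lemma X_smult: "X (smult a Q) = smult (\<sigma> a) (X Q) + smult (\<delta> a) Q"
  by (rule poly_eqI) (simp add: coeff_X s_mult d_mult algebra_simps)

lemma Xp_add: "(X^^i) (A + B) = (X^^i) A + (X^^i) B"
  by (induction i) (simp_all add: X_add)

lemma Xp_0[simp]: "(X^^i) 0 = 0"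
  by (induction i) simp_all

lemma X_sum: "X (\<Sum>i\<in>S. f i) = (\<Sum>i\<in>S. X (f i))"
  by (induction S rule: infinite_finite_induct) (simp_all add: X_add)

lemma Xp_sum: "(X^^k) (\<Sum>i\<in>S. f i) = (\<Sum>i\<in>S. (X^^k) (f i))"
  by (induction S rule: infinite_finite_induct) (simp_all add: Xp_add)

lemma smult_sum_right: "smult a (\<Sum>i\<in>S. f i) = (\<Sum>i\<in>S. smult a (f i))"
  by (induction S rule: infinite_finite_induct) (simp_all add: smult_add_right)

lemma M_bound: "degree P \<le> N \<Longrightarrow> M P Q = (\<Sum>i\<le>N. smult (coeff P i) ((X^^i) Q))"
  unfolding ore_mult_def
  by (rule sum.mono_neutral_left) (auto simp: coeff_eq_0)

lemma M_add_left: "M (A + B) Q = M A Q + M B Q"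
proof -
  let ?N = "max (degree A) (degree B)"
  have "M (A + B) Q = (\<Sum>i\<le>?N. smult (coeff (A+B) i) ((X^^i) Q))"
    by (rule M_bound) (simp add: degree_add_le)
  also have "\<dots> = (\<Sum>i\<le>?N. smult (coeff A i) ((X^^i) Q)) + (\<Sum>i\<le>?N. smult (coeff B i) ((X^^i) Q))"
    by (simp add: smult_add_left sum.distrib)
  also have "\<dots> = M A Q + M B Q"
    by (simp add: M_bound[symmetric])
  finally show ?thesis .
qed

lemma M_0_left[simp]: "M 0 Q = 0"
  by (simp add: ore_mult_def)

lemma M_0_right[simp]: "M P 0 = 0"
  by (simp add: ore_mult_def)

lemma M_add_right: "M P (A + B) = M P A + M P B"
  by (simp add: ore_mult_def Xp_add smult_add_right sum.distrib)

lemma M_minus_right: "M P (- A) = - M P A"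
  using M_add_right[of P A "-A"] minus_unique[of "M P A" "M P (-A)"] by simp

lemma M_diff_right: "M P (A - B) = M P A - M P B"
  using M_add_right[of P A "-B"] M_minus_right[of P B] by simp

lemma M_minus_left: "M (- A) Q = - M A Q"
  using M_add_left[of A "-A" Q] minus_unique[of "M A Q" "M (-A) Q"] by simp

lemma M_diff_left: "M (A - B) Q = M A Q - M B Q"
  using M_add_left[of A "-B" Q] M_minus_left[of B Q] by simp

lemma M_smult_left: "M (smult a A) Q = smult a (M A Q)"
proof -
  have "M (smult a A) Q = (\<Sum>i\<le>degree A. smult (coeff (smult a A) i) ((X^^i) Q))"
    by (rule M_bound) simp
  also have "\<dots> = smult a (M A Q)"
    by (simp add: ore_mult_def smult_sum_right)
  finally show ?thesis .
qed

lemma M_sum_left: "M (\<Sum>i\<in>S. f i) T = (\<Sum>i\<in>S. M (f i) T)"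
  by (induction S rule: infinite_finite_induct) (simp_all add: M_add_left)

lemma M_const_left: "M [:[:c:]:] Q = smult [:c:] Q"
  by (simp add: ore_mult_def)

lemma Xp_monom: "(X^^i) [:[:c:]:] = monom [:c:] i"
proof (induction i)
  case 0 then show ?case by (simp add: monom_0)
next
  case (Suc i)
  show ?case using Suc
    by (auto intro!: poly_eqI simp: coeff_X coeff_monom s_const)
qed

lemma M_const_right: "M Q [:[:c:]:] = smult [:c:] Q"
proof (rule poly_eqI)
  fix k
  have "coeff (M Q [:[:c:]:]) k = (\<Sum>i\<le>degree Q. coeff Q i * coeff (monom [:c:] i) k)"
    by (simp add: ore_mult_def Xp_monom coeff_sum)
  also have "\<dots> = coeff (smult [:c:] Q) k"
    by (cases "k \<le> degree Q") (auto simp: coeff_monom coeff_eq_0 mult.commute if_distrib cong: if_cong)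
  finally show "coeff (M Q [:[:c:]:]) k = coeff (smult [:c:] Q) k" .
qed

lemma M_pCons0: "M (pCons 0 A) T = M A (X T)"
proof -
  have "M (pCons 0 A) T = (\<Sum>i\<le>Suc (degree A). smult (coeff (pCons 0 A) i) ((X^^i) T))"
    by (rule M_bound) (simp add: degree_pCons_le)
  also have "\<dots> = (\<Sum>i\<le>degree A. smult (coeff A i) ((X^^i) (X T)))"
    by (simp add: sum.atMost_Suc_shift funpow_Suc_right del: sum.atMost_Suc funpow.simps)
  finally show ?thesis by (simp add: ore_mult_def)
qed

lemma M_X: "M (X Q) T = X (M Q T)"
proof -
  let ?N = "degree Q"
  have "M (X Q) T = M (pCons 0 (map_poly \<sigma> Q)) T + M (map_poly \<delta> Q) T"
    by (simp add: ore_xmul_def M_add_left)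
  also have "\<dots> = M (map_poly \<sigma> Q) (X T) + M (map_poly \<delta> Q) T"
    by (simp add: M_pCons0)
  also have "\<dots> = (\<Sum>i\<le>?N. smult (\<sigma> (coeff Q i)) ((X^^i) (X T))) + (\<Sum>i\<le>?N. smult (\<delta> (coeff Q i)) ((X^^i) T))"
    by (simp add: M_bound[of _ ?N] map_poly_degree_leq coeff_map_poly)
  also have "\<dots> = (\<Sum>i\<le>?N. X (smult (coeff Q i) ((X^^i) T)))"
    by (simp add: X_smult sum.distrib funpow_swap1)
  also have "\<dots> = X (M Q T)"
    by (simp add: ore_mult_def X_sum)
  finally show ?thesis .
qed

lemma M_Xp: "M ((X^^k) Q) T = (X^^k) (M Q T)"
  by (induction k arbitrary: Q) (simp_all add: M_X funpow_Suc_right del: funpow.simps)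

lemma M_assoc: "M (M P Q) T = M P (M Q T)"
proof -
  have "M (M P Q) T = (\<Sum>i\<le>degree P. M (smult (coeff P i) ((X^^i) Q)) T)"
    by (simp add: ore_mult_def[of _ _ P Q] M_sum_left)
  also have "\<dots> = (\<Sum>i\<le>degree P. smult (coeff P i) ((X^^i) (M Q T)))"
    by (simp add: M_smult_left M_Xp)
  also have "\<dots> = M P (M Q T)" by (simp add: ore_mult_def)
  finally show ?thesis .
qed

end



lemma deg_rel:
  fixes h f g :: "'a::field poly"
  assumes h: "degree h > 1" and f: "f \<noteq> 0" and g: "g \<noteq> 0"
    and eq: "pcompose f h * g = pcompose g h * f"
  shows "degree f = degree g"
proof -
  have h0: "degree h > 0" using h by simp
  have fh: "pcompose f h \<noteq> 0" using f pcompose_eq_0[OF _ h0] by blast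
  have gh: "pcompose g h \<noteq> 0" using g pcompose_eq_0[OF _ h0] by blast
  have "degree f * degree h + degree g = degree g * degree h + degree f"
    using arg_cong[OF eq, of degree] fh gh f g by (simp add: degree_mult_eq degree_pcompose)
  moreover obtain k where k: "degree h = Suc (Suc k)" using h by (cases "degree h"; cases "degree h - 1") auto
  ultimately have "degree f * Suc (Suc k) + degree g = degree g * Suc (Suc k) + degree f" by simp
  then have "degree f * Suc k + (degree f + degree g) = degree g * Suc k + (degree f + degree g)"
    by (simp only: mult_Suc_right ac_simps)
  then have "degree f * Suc k = degree g * Suc k" by linarith
  then show ?thesis using mult_right_cancel[of "Suc k" "degree f" "degree g"] by simp
qed

lemma ratio_lemma:
  fixes h q q' :: "'a::field poly"
  assumes h: "degree h > 1" and q: "q \<noteq> 0" and q': "q' \<noteq> 0"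
    and eq: "pcompose q h * q' = pcompose q' h * q"
  shows "\<exists>c. q = smult c q'"
proof -
  have de: "degree q = degree q'" by (rule deg_rel[OF h q q' eq])
  define c where "c = lead_coeff q / lead_coeff q'"
  define r where "r = q - smult c q'"
  have "pcompose r h * q' = pcompose q' h * r"
    using eq by (simp add: r_def pcompose_diff pcompose_smult algebra_simps)
  have cr: "coeff r (degree q) = 0"
    using q' de by (simp add: r_def c_def)
  have dr: "degree r \<le> degree q"
    unfolding r_def using de by (metis degree_diff_le degree_smult_le le_refl)
  have "r = 0"
  proof (rule ccontr)
    assume r0: "r \<noteq> 0"
    have "degree r = degree q'" by (rule deg_rel[OF h r0 q']) fact
    then have "coeff r (degree q) \<noteq> 0" using de r0 by (metis leading_coeff_0_iff)
    then show False using cr by simp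
  qed
  then show ?thesis unfolding r_def by auto
qed



locale ore2 = ore +
  assumes deg: "degree (\<sigma> [:0,1:]) > 1"
begin

lemma sk_pcompose: "(\<sigma>^^k) f = pcompose f ((\<sigma>^^k) [:0,1:])"
proof (induction k arbitrary: f)
  case 0 then show ?case by (simp add: pcompose_idR)
next
  case (Suc k)
  have "(\<sigma>^^Suc k) f = \<sigma> ((\<sigma>^^k) f)" by simp
  also have "\<dots> = \<sigma> (pcompose f ((\<sigma>^^k) [:0,1:]))" by (simp only: Suc.IH[of f])
  also have "\<dots> = pcompose f (pcompose ((\<sigma>^^k) [:0,1:]) (\<sigma> [:0,1:]))"
    by (subst s_pcompose) (simp add: pcompose_assoc)
  also have "\<dots> = pcompose f ((\<sigma>^^Suc k) [:0,1:])"
    by (simp only: funpow.simps o_apply, subst (2) s_pcompose, rule refl)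
  finally show ?case .
qed

lemma sk_deg: "degree ((\<sigma>^^k) [:0,1:]) = degree (\<sigma> [:0,1:]) ^ k"
proof (induction k)
  case 0 then show ?case by simp
next
  case (Suc k)
  have "(\<sigma>^^Suc k) [:0,1:] = pcompose ((\<sigma>^^k) [:0,1:]) (\<sigma> [:0,1:])"
    by (simp only: funpow.simps o_apply, subst (1) s_pcompose, rule refl)
  then show ?case using Suc by (simp add: degree_pcompose)
qed

lemma sk_deg_gt: "k > 0 \<Longrightarrow> degree ((\<sigma>^^k) [:0,1:]) > 1"
  unfolding sk_deg using one_less_power[OF deg] by blast

lemma sk_nz: "a \<noteq> 0 \<Longrightarrow> (\<sigma>^^k) a \<noteq> 0"
proof -
  assume a: "a \<noteq> 0"
  have "degree ((\<sigma>^^k) [:0,1:]) > 0" using deg by (simp add: sk_deg)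
  then show ?thesis using a pcompose_eq_0 by (metis sk_pcompose)
qed

lemma X_deg: "degree R \<le> D \<Longrightarrow> degree (X R) \<le> Suc D"
  by (rule degree_le) (auto simp: coeff_X coeff_eq_0)

lemma X_top: "degree R \<le> D \<Longrightarrow> coeff (X R) (Suc D) = \<sigma> (coeff R D)"
  by (simp add: coeff_X coeff_eq_0)

lemma Xp_deg: "degree ((X^^i) Q) \<le> degree Q + i \<and> coeff ((X^^i) Q) (degree Q + i) = (\<sigma>^^i) (lead_coeff Q)"
proof (induction i)
  case 0 then show ?case by simp
next
  case (Suc i)
  then show ?case using X_deg[of "(X^^i) Q" "degree Q + i"] X_top[of "(X^^i) Q" "degree Q + i"] by simp
qed

lemma M_coeff: "coeff (M A B) k = (\<Sum>i\<le>degree A. coeff A i * coeff ((X^^i) B) k)"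
  by (simp add: ore_mult_def coeff_sum)

lemma M_deg: "degree (M A B) \<le> degree A + degree B"
proof (rule degree_le, intro allI impI)
  fix k assume k: "degree A + degree B < k"
  have "coeff ((X^^i) B) k = 0" if "i \<le> degree A" for i
    using Xp_deg[of i B] that k by (intro coeff_eq_0) linarith
  then show "coeff (M A B) k = 0" by (simp add: M_coeff)
qed

lemma M_top: "coeff (M A B) (degree A + degree B) = lead_coeff A * (\<sigma>^^degree A) (lead_coeff B)"
proof -
  have z: "coeff A i * coeff ((X^^i) B) (degree A + degree B) = 0" if "i \<in> {..degree A} - {degree A}" for i
  proof -
    have "i < degree A" using that by auto
    then show ?thesis using Xp_deg[of i B] by (simp add: coeff_eq_0)
  qed
  have "coeff (M A B) (degree A + degree B) = coeff A (degree A) * coeff ((X^^degree A) B) (degree A + degree B)"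
    unfolding M_coeff by (subst sum.remove[of _ "degree A"]) (auto intro!: sum.neutral z)
  then show ?thesis using Xp_deg[of "degree A" B] by (simp add: add.commute)
qed

lemma M_nz: assumes "A \<noteq> 0" "B \<noteq> 0"
  shows "M A B \<noteq> 0" "degree (M A B) = degree A + degree B"
    "lead_coeff (M A B) = lead_coeff A * (\<sigma>^^degree A) (lead_coeff B)"
proof -
  have nz: "coeff (M A B) (degree A + degree B) \<noteq> 0"
    using assms sk_nz by (simp add: M_top)
  then show d: "degree (M A B) = degree A + degree B"
    using M_deg le_degree antisym by blast
  show "M A B \<noteq> 0" using nz by auto
  show "lead_coeff (M A B) = lead_coeff A * (\<sigma>^^degree A) (lead_coeff B)"
    using d M_top by simp
qed

end



context ore2
begin

abbreviation CC where "CC P \<equiv> centralizer \<sigma> \<delta> P"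

lemma cent_add: "Q \<in> CC P \<Longrightarrow> T \<in> CC P \<Longrightarrow> Q + T \<in> CC P"
  by (simp add: centralizer_def M_add_left M_add_right)

lemma cent_diff: "Q \<in> CC P \<Longrightarrow> T \<in> CC P \<Longrightarrow> Q - T \<in> CC P"
  by (simp add: centralizer_def M_diff_left M_diff_right)

lemma cent_mult: "Q \<in> CC P \<Longrightarrow> T \<in> CC P \<Longrightarrow> M Q T \<in> CC P"
  unfolding centralizer_def by (simp add: M_assoc[symmetric]) (simp add: M_assoc)

lemma cent_const: "[:[:c:]:] \<in> CC P"
  by (simp add: centralizer_def M_const_left M_const_right)

lemma cent_self: "P \<in> CC P"
  by (simp add: centralizer_def)

lemma gen_sub: "G \<subseteq> CC P \<Longrightarrow> alg_gen \<sigma> \<delta> G \<subseteq> CC P"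
proof
  fix x assume G: "G \<subseteq> CC P" and x: "x \<in> alg_gen \<sigma> \<delta> G"
  from x show "x \<in> CC P"
    by (induction rule: alg_gen.induct) (use G in \<open>auto simp: cent_const cent_add cent_mult\<close>)
qed

lemma lead_eq:
  assumes "Q \<in> CC P" "Q \<noteq> 0" "P \<noteq> 0"
  shows "lead_coeff P * (\<sigma>^^degree P) (lead_coeff Q) = lead_coeff Q * (\<sigma>^^degree Q) (lead_coeff P)"
proof -
  have "M P Q = M Q P" using assms(1) by (simp add: centralizer_def)
  then show ?thesis using M_nz(3)[OF assms(3,2)] M_nz(3)[OF assms(2,3)] by simp
qed

lemma lead_ratio:
  assumes "Q \<in> CC P" "Q \<noteq> 0" "T \<in> CC P" "T \<noteq> 0" "degree P > 0" "degree Q = degree T"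
  shows "\<exists>c. lead_coeff Q = smult c (lead_coeff T)"
proof -
  have P0: "P \<noteq> 0" using assms(5) by auto
  let ?h = "(\<sigma>^^degree P) [:0,1:]"
  let ?p = "lead_coeff P" and ?q = "lead_coeff Q" and ?t = "lead_coeff T"
  let ?s = "(\<sigma>^^degree Q) ?p"
  have s1: "(\<sigma>^^degree P) ?q = pcompose ?q ?h" by (rule sk_pcompose)
  have s2: "(\<sigma>^^degree P) ?t = pcompose ?t ?h" by (rule sk_pcompose)
  have e1: "?p * pcompose ?q ?h = ?q * ?s" using lead_eq[OF assms(1,2) P0] s1 by simp
  have e2: "?p * pcompose ?t ?h = ?t * ?s" using lead_eq[OF assms(3,4) P0] assms(6) s2 by simp
  have "?p * (pcompose ?q ?h * ?t) = (?p * pcompose ?q ?h) * ?t" by (simp only: mult.assoc)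
  also have "\<dots> = ?q * ?s * ?t" by (simp only: e1)
  also have "\<dots> = ?t * ?s * ?q" by (simp only: ac_simps)
  also have "\<dots> = (?p * pcompose ?t ?h) * ?q" by (simp only: e2)
  also have "\<dots> = ?p * (pcompose ?t ?h * ?q)" by (simp only: mult.assoc)
  finally have "?p * (pcompose ?q ?h * ?t) = ?p * (pcompose ?t ?h * ?q)" .
  then have "pcompose ?q ?h * ?t = pcompose ?t ?h * ?q" using P0 by simp
  then show ?thesis
    using ratio_lemma[OF sk_deg_gt[OF assms(5)]] assms(2,4) by simp
qed

definition pw where "pw P k = ((M P)^^k) 1"

lemma pw_props:
  assumes "P \<noteq> 0"
  shows "pw P k \<in> CC P \<and> pw P k \<noteq> 0 \<and> degree (pw P k) = k * degree P \<and> pw P k \<in> alg_gen \<sigma> \<delta> (insert P G)"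
proof (induction k)
  case 0
  have "[:[:1:]:] \<in> alg_gen \<sigma> \<delta> (insert P G)" by (rule alg_gen.const)
  then show ?case using cent_const[of 1 P] by (simp add: pw_def one_pCons[symmetric])
next
  case (Suc k)
  have e: "pw P (Suc k) = M P (pw P k)" by (simp add: pw_def)
  have g: "P \<in> alg_gen \<sigma> \<delta> (insert P G)" by (rule alg_gen.gen) simp
  have IH: "pw P k \<in> CC P" "pw P k \<noteq> 0" "degree (pw P k) = k * degree P" "pw P k \<in> alg_gen \<sigma> \<delta> (insert P G)"
    using Suc by auto
  have "M P (pw P k) \<in> CC P" by (rule cent_mult[OF cent_self IH(1)])
  moreover have "M P (pw P k) \<noteq> 0" "degree (M P (pw P k)) = Suc k * degree P"
    using M_nz(1,2)[OF assms IH(2)] IH(3) by simp_all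
  moreover have "M P (pw P k) \<in> alg_gen \<sigma> \<delta> (insert P G)" by (rule alg_gen.mult[OF g IH(4)])
  ultimately show ?case unfolding e by blast
qed

end



context ore2
begin

theorem main:
  assumes n: "degree P = n" "n > 0"
  shows "\<exists>gs. length gs = n \<and> alg_gen \<sigma> \<delta> (set gs) = CC P"
proof -
  have P0: "P \<noteq> 0" using n by auto
  define good where "good r m \<longleftrightarrow> (\<exists>Q\<in>CC P. Q \<noteq> 0 \<and> degree Q = m \<and> m mod n = r)" for r m
  define md where "md r = (LEAST m. good r m)" for r
  define rep where "rep r = (if r = 0 then 1 else if (\<exists>m. good r m)
      then (SOME Q. Q \<in> CC P \<and> Q \<noteq> 0 \<and> degree Q = md r) else P)" for r
  define gs where "gs = P # map rep [1..<n]"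
  have len: "length gs = n" using n(2) by (simp add: gs_def)
  have one_C: "(1::'a poly poly) \<in> CC P" using cent_const[of 1 P] by (simp add: one_pCons[symmetric])
  have repP: "rep r \<in> CC P \<and> rep r \<noteq> 0 \<and> degree (rep r) = md r \<and> md r mod n = r"
    if r0: "r \<noteq> 0" and ex: "\<exists>m. good r m" for r
  proof -
    have g: "good r (md r)" unfolding md_def using ex by (rule LeastI_ex)
    then have "\<exists>Q. Q \<in> CC P \<and> Q \<noteq> 0 \<and> degree Q = md r" unfolding good_def by blast
    then have "(SOME Q. Q \<in> CC P \<and> Q \<noteq> 0 \<and> degree Q = md r) \<in> CC P \<and>
        (SOME Q. Q \<in> CC P \<and> Q \<noteq> 0 \<and> degree Q = md r) \<noteq> 0 \<and>
        degree (SOME Q. Q \<in> CC P \<and> Q \<noteq> 0 \<and> degree Q = md r) = md r" by (rule someI_ex)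
    moreover have "md r mod n = r" using g unfolding good_def by blast
    ultimately show ?thesis using r0 ex by (simp add: rep_def)
  qed
  have repC: "rep r \<in> CC P" for r
  proof (cases "r = 0")
    case True then show ?thesis using one_C by (simp add: rep_def)
  next
    case False
    then show ?thesis using repP[OF False] cent_self by (cases "\<exists>m. good r m") (auto simp: rep_def)
  qed
  have GC: "set gs \<subseteq> CC P" using repC cent_self by (auto simp: gs_def)
  have Pin: "P \<in> set gs" by (simp add: gs_def)
  have ins: "insert P (set gs) = set gs" using Pin by blast
  have key: "\<forall>Q. Q \<in> CC P \<longrightarrow> degree Q = m \<longrightarrow> Q \<in> alg_gen \<sigma> \<delta> (set gs)" for m
  proof (induction m rule: less_induct)
    case (less m)
    show ?case
    proof (intro allI impI)
      fix Q assume Q: "Q \<in> CC P" "degree Q = m"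
      show "Q \<in> alg_gen \<sigma> \<delta> (set gs)"
      proof (cases "Q = 0")
        case True then show ?thesis using alg_gen.const[of 0 \<sigma> \<delta> "set gs"] by simp
      next
        case Q0: False
        obtain R where R: "R \<in> CC P" "R \<noteq> 0" "degree R \<le> m" "degree R mod n = m mod n"
          "R \<in> alg_gen \<sigma> \<delta> (set gs)"
        proof (cases "m mod n = 0")
          case True
          have "(1::'a poly poly) \<in> alg_gen \<sigma> \<delta> (set gs)"
            using alg_gen.const[of 1 \<sigma> \<delta> "set gs"] by (simp add: one_pCons[symmetric])
          then show ?thesis using that[of 1] one_C True by simp
        next
          case False
          have ex: "\<exists>m'. good (m mod n) m'" using Q Q0 unfolding good_def by blast
          have "m mod n < n" using n(2) by simp
          then have "rep (m mod n) \<in> set gs" using False by (auto simp: gs_def)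
          then have a: "rep (m mod n) \<in> alg_gen \<sigma> \<delta> (set gs)" by (rule alg_gen.gen)
          have "good (m mod n) m" using Q Q0 unfolding good_def by blast
          then have "md (m mod n) \<le> m" unfolding md_def by (rule Least_le)
          then show ?thesis using that[of "rep (m mod n)"] repP[OF False ex] a by simp
        qed
        define k where "k = (m - degree R) div n"
        have "n dvd (m - degree R)" using R(3,4) mod_eq_dvd_iff_nat[of "degree R" m n] by simp
        then have mk: "k * n + degree R = m" unfolding k_def using R(3) by simp
        define T where "T = M (pw P k) R"
        have pwp: "pw P k \<in> CC P" "pw P k \<noteq> 0" "degree (pw P k) = k * n" "pw P k \<in> alg_gen \<sigma> \<delta> (set gs)"
          using pw_props[OF P0, of k "set gs"] n(1) ins by auto
        have TC: "T \<in> CC P" unfolding T_def by (rule cent_mult[OF pwp(1) R(1)])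
        have T0: "T \<noteq> 0" and Td: "degree T = m"
          using M_nz(1,2)[OF pwp(2) R(2)] pwp(3) mk by (simp_all add: T_def)
        have Ta: "T \<in> alg_gen \<sigma> \<delta> (set gs)" unfolding T_def by (rule alg_gen.mult[OF pwp(4) R(5)])
        obtain c where c: "lead_coeff Q = smult c (lead_coeff T)"
          using lead_ratio[OF Q(1) Q0 TC T0] n Q(2) Td by auto
        define Q' where "Q' = Q - M [:[:c:]:] T"
        have cT: "M [:[:c:]:] T = smult [:c:] T" by (rule M_const_left)
        have Q'C: "Q' \<in> CC P" unfolding Q'_def by (rule cent_diff[OF Q(1) cent_mult[OF cent_const TC]])
        have cm: "coeff Q' m = 0"
          using c Q(2) Td by (simp add: Q'_def cT)
        have dm: "degree Q' \<le> m"
          unfolding Q'_def cT using Q(2) Td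
          by (metis degree_diff_le degree_smult_le le_refl order_trans)
        have Q'a: "Q' \<in> alg_gen \<sigma> \<delta> (set gs)"
        proof (cases "Q' = 0")
          case True then show ?thesis using alg_gen.const[of 0 \<sigma> \<delta> "set gs"] by simp
        next
          case False
          then have "degree Q' \<noteq> m" using cm by (metis leading_coeff_0_iff)
          then have "degree Q' < m" using dm by simp
          then show ?thesis using less Q'C by blast
        qed
        have "Q = Q' + M [:[:c:]:] T" by (simp add: Q'_def)
        also have "\<dots> \<in> alg_gen \<sigma> \<delta> (set gs)"
          by (rule alg_gen.add[OF Q'a alg_gen.mult[OF alg_gen.const Ta]])
        finally show ?thesis .
      qed
    qed
  qed
  have "alg_gen \<sigma> \<delta> (set gs) = CC P"
    using gen_sub[OF GC] key by blast
  then show ?thesis using len by blast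
qed

end

theorem corollary5p1:
  fixes \<sigma> \<delta> :: "'a::field poly \<Rightarrow> 'a poly" and P :: "'a poly poly" and n :: nat
  assumes "K_alg_endo \<sigma>"
    and "degree (\<sigma> [:0, 1:]) > 1"
    and "sigma_derivation \<sigma> \<delta>"
    and "degree P = n" and "n > 0"
  shows "\<exists>gs :: 'a poly poly list. length gs = n \<and> alg_gen \<sigma> \<delta> (set gs) = centralizer \<sigma> \<delta> P"
proof -
  interpret ore2 \<sigma> \<delta>
    using assms(1,2,3) by (unfold_locales) auto
  show ?thesis using main[OF assms(4,5)] by blast
qed

end
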